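(* Let $\Gamma$ be an infinite, connected, locally finite weighted graph, and let $X$ be a finite subset of its vertex set. Then the following are equivalent: (1) every function $f:X\to\mathbb{R}$ extends to a harmonic function on all of $\Gamma$; (2) there is no non-zero finitely supported function on $\Gamma$ that is harmonic on $\Gamma\setminus X$.
   Context: A weighted graph has undirected edges without loops or multiple edges, with weights $\omega_{xy}=\omega_{yx}>0$ and degrees $\deg x=\sum_{y\sim x}\omega_{xy}$. The Laplacian is $\Delta f(x)=f(x)-\frac{1}{\deg x}\sum_{y\sim x}\omega_{xy}f(y)$. A function $f$ is harmonic on a set $A$ of vertices if $\Delta f(x)=0$ for every $x\in A$, and harmonic if this holds for all vertices. *)

theory Defs
  imports Complex_Main
begin

definition weighted_graph :: "'a set \<Rightarrow> ('a \<Rightarrow> 'a \<Rightarrow> real) \<Rightarrow> bool" where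
  "weighted_graph V w \<longleftrightarrow>
     (\<forall>x y. w x y = w y x) \<and> (\<forall>x y. w x y \<ge> 0) \<and> (\<forall>x. w x x = 0) \<and>
     (\<forall>x y. w x y \<noteq> 0 \<longrightarrow> x \<in> V \<and> y \<in> V)"

definition adj :: "('a \<Rightarrow> 'a \<Rightarrow> real) \<Rightarrow> 'a \<Rightarrow> 'a \<Rightarrow> bool" where
  "adj w x y \<longleftrightarrow> w x y > 0"

definition nbrs :: "('a \<Rightarrow> 'a \<Rightarrow> real) \<Rightarrow> 'a \<Rightarrow> 'a set" where
  "nbrs w x = {y. adj w x y}"

definition locally_finite :: "'a set \<Rightarrow> ('a \<Rightarrow> 'a \<Rightarrow> real) \<Rightarrow> bool" where
  "locally_finite V w \<longleftrightarrow> (\<forall>x\<in>V. finite (nbrs w x))"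

definition connected_graph :: "'a set \<Rightarrow> ('a \<Rightarrow> 'a \<Rightarrow> real) \<Rightarrow> bool" where
  "connected_graph V w \<longleftrightarrow> (\<forall>x\<in>V. \<forall>y\<in>V. (x, y) \<in> {(u, v). adj w u v}\<^sup>*)"

definition deg :: "('a \<Rightarrow> 'a \<Rightarrow> real) \<Rightarrow> 'a \<Rightarrow> real" where
  "deg w x = (\<Sum>y\<in>nbrs w x. w x y)"

definition laplacian :: "('a \<Rightarrow> 'a \<Rightarrow> real) \<Rightarrow> ('a \<Rightarrow> real) \<Rightarrow> 'a \<Rightarrow> real" where
  "laplacian w f x = f x - (1 / deg w x) * (\<Sum>y\<in>nbrs w x. w x y * f y)"

definition harmonic_on :: "('a \<Rightarrow> 'a \<Rightarrow> real) \<Rightarrow> 'a set \<Rightarrow> ('a \<Rightarrow> real) \<Rightarrow> bool" where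
  "harmonic_on w A f \<longleftrightarrow> (\<forall>x\<in>A. laplacian w f x = 0)"

definition finitely_supported :: "'a set \<Rightarrow> ('a \<Rightarrow> real) \<Rightarrow> bool" where
  "finitely_supported V f \<longleftrightarrow> finite {x\<in>V. f x \<noteq> 0}"

end

theory Submission
  imports Defs "HOL-Library.Function_Algebras"
begin


definition Kop :: "('a \<Rightarrow> 'a \<Rightarrow> real) \<Rightarrow> ('a \<Rightarrow> real) \<Rightarrow> 'a \<Rightarrow> real" where
  "Kop w u x = deg w x * u x - (\<Sum>y\<in>nbrs w x. w x y * u y)"

lemma wg_nbrs_V:
  assumes "weighted_graph V w" "y \<in> nbrs w x" shows "x \<in> V" "y \<in> V"
  using assms unfolding weighted_graph_def nbrs_def adj_def by (metis less_irrefl mem_Collect_eq)+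

lemma wg_nbrs_out:
  assumes "weighted_graph V w" "x \<notin> V" shows "nbrs w x = {}"
  using wg_nbrs_V[OF assms(1)] assms(2) by blast

lemma wg_finite_nbrs:
  assumes "weighted_graph V w" "locally_finite V w" shows "finite (nbrs w x)"
  using assms wg_nbrs_out[OF assms(1), of x] unfolding locally_finite_def by (cases "x \<in> V") auto

lemma wg_w0:
  assumes "weighted_graph V w" "y \<notin> nbrs w x" shows "w x y = 0"
  using assms unfolding weighted_graph_def nbrs_def adj_def by (metis less_eq_real_def mem_Collect_eq)

lemma wg_nbr_sym:
  assumes "weighted_graph V w" shows "y \<in> nbrs w x \<longleftrightarrow> x \<in> nbrs w y"
  using assms unfolding weighted_graph_def nbrs_def adj_def by auto

lemma deg_pos:
  assumes wg: "weighted_graph V w" and lf: "locally_finite V w" and inf: "infinite V"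
    and con: "connected_graph V w" and x: "x \<in> V"
  shows "deg w x > 0"
proof -
  obtain y where y: "y \<in> V" "y \<noteq> x"
    using inf by (metis finite.simps finite_insert insertI1 infinite_imp_nonempty ex_in_conv
        finite_subset subsetI insertCI)
  have "(x, y) \<in> {(u, v). adj w u v}\<^sup>*" using con x y unfolding connected_graph_def by auto
  then obtain z where "(x, z) \<in> {(u, v). adj w u v}" using y(2)
    by (metis converse_rtranclE)
  then have z: "z \<in> nbrs w x" unfolding nbrs_def by auto
  have "\<forall>i\<in>nbrs w x. 0 \<le> w x i" using wg unfolding weighted_graph_def by auto
  moreover have "0 < w x z" using z unfolding nbrs_def adj_def by auto
  ultimately show ?thesis unfolding deg_def
    using sum_pos2[OF wg_finite_nbrs[OF wg lf] z] by blast
qed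

lemma lap_iff_K:
  assumes "deg w x > 0"
  shows "laplacian w f x = 0 \<longleftrightarrow> Kop w f x = 0"
proof -
  have "Kop w f x = deg w x * laplacian w f x"
    unfolding Kop_def laplacian_def using assms by (simp add: field_simps)
  then show ?thesis using assms by simp
qed

lemma nbr_sum:
  assumes wg: "weighted_graph V w" and lf: "locally_finite V w" and S: "finite S"
    and h: "\<forall>y\<in>nbrs w x. h y \<noteq> 0 \<longrightarrow> y \<in> S"
  shows "(\<Sum>y\<in>nbrs w x. w x y * h y) = (\<Sum>y\<in>S. w x y * h y)"
proof -
  have fn: "finite (nbrs w x)" using wg_finite_nbrs[OF wg lf] .
  have "(\<Sum>y\<in>nbrs w x. w x y * h y) = (\<Sum>y\<in>nbrs w x \<union> S. w x y * h y)"
    by (rule sum.mono_neutral_left) (use fn S wg_w0[OF wg] in auto)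
  also have "\<dots> = (\<Sum>y\<in>S. w x y * h y)"
    by (rule sum.mono_neutral_right) (use fn S h in auto)
  finally show ?thesis .
qed

lemma nbr_all_max:
  assumes wg: "weighted_graph V w" and lf: "locally_finite V w"
    and K: "Kop w u x = 0" and ux: "u x = M" and le: "\<forall>y\<in>V. u y \<le> M"
    and z: "z \<in> nbrs w x"
  shows "u z = M"
proof -
  have fn: "finite (nbrs w x)" using wg_finite_nbrs[OF wg lf] .
  have e1: "(\<Sum>y\<in>nbrs w x. w x y * M) = deg w x * M" unfolding deg_def by (rule sum_distrib_right[symmetric])
  have "(\<Sum>y\<in>nbrs w x. w x y * (M - u y)) = (\<Sum>y\<in>nbrs w x. w x y * M) - (\<Sum>y\<in>nbrs w x. w x y * u y)"
    by (simp add: right_diff_distrib sum_subtractf)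
  also have "\<dots> = deg w x * M - (\<Sum>y\<in>nbrs w x. w x y * u y)" using e1 by simp
  also have "\<dots> = 0" using K ux unfolding Kop_def by simp
  finally have s0: "(\<Sum>y\<in>nbrs w x. w x y * (M - u y)) = 0" .
  have nn: "\<forall>y\<in>nbrs w x. 0 \<le> w x y * (M - u y)"
  proof
    fix y assume y: "y \<in> nbrs w x"
    then have "y \<in> V" by (rule wg_nbrs_V(2)[OF wg])
    then have "u y \<le> M" using le by blast
    moreover have "0 \<le> w x y" using wg unfolding weighted_graph_def by blast
    ultimately show "0 \<le> w x y * (M - u y)" by simp
  qed
  have "\<forall>y\<in>nbrs w x. w x y * (M - u y) = 0" using sum_nonneg_eq_0_iff[OF fn, of "\<lambda>y. w x y * (M - u y)"] nn s0 by blast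
  then have "w x z * (M - u z) = 0" using z by blast
  moreover have "w x z > 0" using z unfolding nbrs_def adj_def by auto
  ultimately show ?thesis by simp
qed

lemma max_principle_pos:
  assumes wg: "weighted_graph V w" and lf: "locally_finite V w" and inf: "infinite V"
    and con: "connected_graph V w"
    and fin: "finite {x\<in>V. u x \<noteq> 0}" and harm: "\<forall>x\<in>V. Kop w u x = 0"
  shows "\<forall>x\<in>V. u x \<le> 0"
proof (rule ccontr)
  assume "\<not> (\<forall>x\<in>V. u x \<le> 0)"
  then obtain x0 where x0: "x0 \<in> V" "u x0 > 0" by auto
  define S where "S = {x\<in>V. u x \<noteq> 0}"
  define M where "M = Max (u ` S)"
  have x0S: "x0 \<in> S" using x0 S_def by auto
  have fS: "finite S" using fin S_def by simp
  have "u x0 \<le> M" unfolding M_def using fS x0S by auto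
  then have Mpos: "M > 0" using x0 by simp
  have le: "\<forall>y\<in>V. u y \<le> M"
  proof
    fix y assume "y \<in> V"
    show "u y \<le> M"
    proof (cases "u y = 0")
      case True then show ?thesis using Mpos by simp
    next
      case False then have "y \<in> S" using \<open>y \<in> V\<close> S_def by auto
      then show ?thesis unfolding M_def using fS by auto
    qed
  qed
  have "M \<in> u ` S" unfolding M_def using fS x0S by (intro Max_in) auto
  then obtain x1 where x1: "x1 \<in> S" "u x1 = M" by auto
  have "V - S \<noteq> {}" using inf fS by (metis Diff_eq_empty_iff finite_subset)
  then obtain y where y: "y \<in> V" "y \<notin> S" by auto
  then have uy: "u y = 0" using S_def by auto
  have x1V: "x1 \<in> V" using x1 S_def by auto
  have "(x1, y) \<in> {(a, b). adj w a b}\<^sup>*" using con x1V y unfolding connected_graph_def by auto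
  then have "y \<in> V \<and> u y = M"
  proof (induction rule: rtrancl_induct)
    case base then show ?case using x1V x1 by simp
  next
    case (step b c)
    then have c: "c \<in> nbrs w b" unfolding nbrs_def by auto
    then have "c \<in> V" using wg_nbrs_V[OF wg] by blast
    moreover have "u c = M"
      using nbr_all_max[OF wg lf _ _ le c] step harm by auto
    ultimately show ?case by simp
  qed
  then show False using uy Mpos by simp
qed

lemma max_principle:
  assumes wg: "weighted_graph V w" and lf: "locally_finite V w" and inf: "infinite V"
    and con: "connected_graph V w"
    and fin: "finite {x\<in>V. u x \<noteq> 0}" and harm: "\<forall>x\<in>V. Kop w u x = 0"
  shows "\<forall>x\<in>V. u x = 0"
proof -
  have a: "\<forall>x\<in>V. u x \<le> 0" using max_principle_pos[OF assms] .
  have "\<forall>x\<in>V. (\<lambda>x. - u x) x \<le> 0"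
    by (rule max_principle_pos[OF wg lf inf con]) (use fin harm in \<open>simp_all add: Kop_def sum_negf\<close>)
  then show ?thesis using a by force
qed


lemma double_sum_swap:
  assumes wg: "weighted_graph V w"
  shows "(\<Sum>x\<in>S. (\<Sum>y\<in>S. w x y * u y) * g x) = (\<Sum>x\<in>S. u x * (\<Sum>y\<in>S. w x y * g y))"
proof -
  have sym: "\<And>x y. w x y = w y x" using wg unfolding weighted_graph_def by blast
  have "(\<Sum>x\<in>S. (\<Sum>y\<in>S. w x y * u y) * g x) = (\<Sum>x\<in>S. \<Sum>y\<in>S. w x y * u y * g x)"
    by (simp add: sum_distrib_right)
  also have "\<dots> = (\<Sum>y\<in>S. \<Sum>x\<in>S. w x y * u y * g x)" by (rule sum.swap)
  also have "\<dots> = (\<Sum>y\<in>S. u y * (\<Sum>x\<in>S. w y x * g x))"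
    by (simp add: sum_distrib_left sym mult.assoc mult.left_commute)
  finally show ?thesis .
qed

lemma dir12:
  assumes wg: "weighted_graph V w" and inf: "infinite V" and con: "connected_graph V w"
    and lf: "locally_finite V w" and finX: "finite X" and XV: "X \<subseteq> V"
    and H: "\<forall>f :: 'a \<Rightarrow> real. \<exists>g. (\<forall>x\<in>X. g x = f x) \<and> harmonic_on w V g"
    and fs: "finitely_supported V u" and hu: "harmonic_on w (V - X) u"
  shows "\<forall>x\<in>V. u x = 0"
proof -
  define supp where "supp = {x\<in>V. u x \<noteq> 0}"
  define S where "S = supp \<union> (\<Union>x\<in>supp. nbrs w x) \<union> X"
  have fsupp: "finite supp" using fs unfolding supp_def finitely_supported_def .
  have fS: "finite S" unfolding S_def using fsupp finX wg_finite_nbrs[OF wg lf] by auto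
  have SV: "S \<subseteq> V" unfolding S_def supp_def using XV wg_nbrs_V[OF wg] by blast
  have Ku0: "\<forall>x\<in>V - X. Kop w u x = 0"
  proof
    fix x assume x: "x \<in> V - X"
    have "laplacian w u x = 0" using hu x unfolding harmonic_on_def by blast
    then show "Kop w u x = 0" using lap_iff_K[OF deg_pos[OF wg lf inf con]] x by blast
  qed
  obtain g where gX: "\<forall>x\<in>X. g x = Kop w u x" and hg: "harmonic_on w V g"
    using H by blast
  have Kg: "\<forall>x\<in>V. Kop w g x = 0"
  proof
    fix x assume x: "x \<in> V"
    have "laplacian w g x = 0" using hg x unfolding harmonic_on_def by blast
    then show "Kop w g x = 0" using lap_iff_K[OF deg_pos[OF wg lf inf con]] x by blast
  qed
  have L: "\<forall>x\<in>S. Kop w u x = deg w x * u x - (\<Sum>y\<in>S. w x y * u y)"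
  proof
    fix x assume "x \<in> S"
    have "(\<Sum>y\<in>nbrs w x. w x y * u y) = (\<Sum>y\<in>S. w x y * u y)"
    proof (rule nbr_sum[OF wg lf fS])
      show "\<forall>y\<in>nbrs w x. u y \<noteq> 0 \<longrightarrow> y \<in> S"
        unfolding S_def supp_def using wg_nbrs_V[OF wg] by blast
    qed
    then show "Kop w u x = deg w x * u x - (\<Sum>y\<in>S. w x y * u y)" unfolding Kop_def by simp
  qed
  have R: "\<forall>x\<in>S. u x * Kop w g x = u x * (deg w x * g x - (\<Sum>y\<in>S. w x y * g y))"
  proof
    fix x assume "x \<in> S"
    show "u x * Kop w g x = u x * (deg w x * g x - (\<Sum>y\<in>S. w x y * g y))"
    proof (cases "u x = 0")
      case True then show ?thesis by simp
    next
      case False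
      then have "x \<in> supp" using \<open>x \<in> S\<close> SV supp_def by auto
      then have "nbrs w x \<subseteq> S" unfolding S_def by blast
      then have "(\<Sum>y\<in>nbrs w x. w x y * g y) = (\<Sum>y\<in>S. w x y * g y)"
        by (intro nbr_sum[OF wg lf fS]) blast
      then show ?thesis unfolding Kop_def by simp
    qed
  qed
  have "(\<Sum>x\<in>S. Kop w u x * g x) = (\<Sum>x\<in>S. (deg w x * u x - (\<Sum>y\<in>S. w x y * u y)) * g x)"
    using L by (intro sum.cong) auto
  also have "\<dots> = (\<Sum>x\<in>S. deg w x * u x * g x) - (\<Sum>x\<in>S. (\<Sum>y\<in>S. w x y * u y) * g x)"
    by (simp add: left_diff_distrib sum_subtractf)
  also have "\<dots> = (\<Sum>x\<in>S. deg w x * u x * g x) - (\<Sum>x\<in>S. u x * (\<Sum>y\<in>S. w x y * g y))"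
    using double_sum_swap[OF wg] by simp
  also have "\<dots> = (\<Sum>x\<in>S. u x * (deg w x * g x - (\<Sum>y\<in>S. w x y * g y)))"
    by (simp add: right_diff_distrib sum_subtractf mult.assoc mult.left_commute)
  also have "\<dots> = (\<Sum>x\<in>S. u x * Kop w g x)"
    using R by (intro sum.cong) auto
  also have "\<dots> = 0" using Kg SV by (intro sum.neutral) auto
  finally have s0: "(\<Sum>x\<in>S. Kop w u x * g x) = 0" .
  have sq: "\<forall>x\<in>S. Kop w u x * g x = (Kop w u x)^2"
  proof
    fix x assume xS: "x \<in> S"
    show "Kop w u x * g x = (Kop w u x)^2"
    proof (cases "x \<in> X")
      case True then show ?thesis using gX by (simp add: power2_eq_square)
    next
      case False then have "Kop w u x = 0" using Ku0 xS SV by auto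
      then show ?thesis by simp
    qed
  qed
  have "(\<Sum>x\<in>S. (Kop w u x)^2) = 0" using s0 sq by simp
  then have "\<forall>x\<in>S. (Kop w u x)^2 = 0"
    using sum_nonneg_eq_0_iff[OF fS, of "\<lambda>x. (Kop w u x)^2"] by simp
  then have "\<forall>x\<in>X. Kop w u x = 0" unfolding S_def by simp
  then have "\<forall>x\<in>V. Kop w u x = 0" using Ku0 by blast
  then show ?thesis
    using max_principle[OF wg lf inf con] fs unfolding finitely_supported_def by blast
qed



definition sc :: "real \<Rightarrow> ('a \<Rightarrow> real) \<Rightarrow> ('a \<Rightarrow> real)" where
  "sc c f = (\<lambda>x. c * f x)"

lemma sc_apply[simp]: "sc c f x = c * f x" by (simp add: sc_def)

interpretation vp: vector_space_pair "sc :: real \<Rightarrow> ('a \<Rightarrow> real) \<Rightarrow> _" "(*) :: real \<Rightarrow> real \<Rightarrow> real"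
  by unfold_locales (simp_all add: fun_eq_iff algebra_simps)

definition dl :: "'a \<Rightarrow> 'a \<Rightarrow> real" where "dl y = (\<lambda>z. if z = y then 1 else 0)"

lemma sum_fun_apply: "(\<Sum>i\<in>A. f i) z = (\<Sum>i\<in>A. f i z)"
  by (induction A rule: infinite_finite_induct) auto

lemma Kop_add: "Kop w (u + v) x = Kop w u x + Kop w v x"
  unfolding Kop_def plus_fun_apply by (simp add: distrib_left sum.distrib)

lemma Kop_sc: "Kop w (sc c u) x = c * Kop w u x"
proof -
  have e: "(\<Sum>y\<in>nbrs w x. w x y * (c * u y)) = c * (\<Sum>y\<in>nbrs w x. w x y * u y)"
    unfolding sum_distrib_left by (rule sum.cong) (simp_all add: mult.left_commute)
  show ?thesis unfolding Kop_def sc_apply e by (simp add: right_diff_distrib mult.left_commute)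
qed

lemma Kop_zero: "Kop w 0 x = 0"
  by (simp add: Kop_def)

definition KS :: "'a set \<Rightarrow> ('a \<Rightarrow> 'a \<Rightarrow> real) \<Rightarrow> ('a \<Rightarrow> real) set" where
  "KS V w = {v. \<exists>u. finite {x. u x \<noteq> 0} \<and> (\<forall>x. x \<notin> V \<longrightarrow> u x = 0) \<and> v = Kop w u}"

lemma KS_sub: "vp.vs1.subspace (KS V w)"
proof (rule vp.vs1.subspaceI)
  show "0 \<in> KS V w" unfolding KS_def
    by (rule CollectI, rule exI[of _ 0]) (simp add: fun_eq_iff Kop_zero)
next
  fix a b
  assume "a \<in> KS V w" "b \<in> KS V w"
  then obtain ua ub where ua: "finite {x. ua x \<noteq> 0}" "\<forall>x. x \<notin> V \<longrightarrow> ua x = 0" "a = Kop w ua"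
    and ub: "finite {x. ub x \<noteq> 0}" "\<forall>x. x \<notin> V \<longrightarrow> ub x = 0" "b = Kop w ub"
    unfolding KS_def by blast
  have "{x. (ua + ub) x \<noteq> 0} \<subseteq> {x. ua x \<noteq> 0} \<union> {x. ub x \<noteq> 0}" by auto
  then have "finite {x. (ua + ub) x \<noteq> 0}" using ua(1) ub(1) by (meson finite_UnI finite_subset)
  moreover have "\<forall>x. x \<notin> V \<longrightarrow> (ua + ub) x = 0" using ua(2) ub(2) by simp
  moreover have "a + b = Kop w (ua + ub)" using ua(3) ub(3) by (simp add: fun_eq_iff Kop_add)
  ultimately show "a + b \<in> KS V w" unfolding KS_def by (intro CollectI exI[of _ "ua + ub"]) simp
next
  fix c a
  assume "a \<in> KS V w"
  then obtain ua where ua: "finite {x. ua x \<noteq> 0}" "\<forall>x. x \<notin> V \<longrightarrow> ua x = 0" "a = Kop w ua"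
    unfolding KS_def by blast
  have "{x. sc c ua x \<noteq> 0} \<subseteq> {x. ua x \<noteq> 0}" by auto
  then have "finite {x. sc c ua x \<noteq> 0}" using ua(1) by (meson finite_subset)
  moreover have "\<forall>x. x \<notin> V \<longrightarrow> sc c ua x = 0" using ua(2) by simp
  moreover have "sc c a = Kop w (sc c ua)" using ua(3) by (simp add: fun_eq_iff Kop_sc)
  ultimately show "sc c a \<in> KS V w" unfolding KS_def by (intro CollectI exI[of _ "sc c ua"]) simp
qed

lemma span_K:
  assumes "v \<in> vp.vs1.span ((\<lambda>x. Kop w (dl x)) ` V)"
  shows "v \<in> KS V w"
proof -
  have "(\<lambda>x. Kop w (dl x)) ` V \<subseteq> KS V w"
  proof
    fix v assume "v \<in> (\<lambda>x. Kop w (dl x)) ` V"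
    then obtain y where y: "y \<in> V" "v = Kop w (dl y)" by blast
    have "{x. dl y x \<noteq> 0} = {y}" by (auto simp: dl_def)
    then show "v \<in> KS V w" unfolding KS_def using y by (intro CollectI exI[of _ "dl y"]) (auto simp: dl_def)
  qed
  then have "vp.vs1.span ((\<lambda>x. Kop w (dl x)) ` V) \<subseteq> KS V w"
    using KS_sub by (rule vp.vs1.span_minimal)
  then show ?thesis using assms by blast
qed

definition ZS :: "'a set \<Rightarrow> ('a \<Rightarrow> real) set" where
  "ZS Y = {v. \<forall>z. z \<notin> Y \<longrightarrow> v z = 0}"

lemma span_dl:
  assumes "v \<in> vp.vs1.span (dl ` Y)"
  shows "\<forall>z. z \<notin> Y \<longrightarrow> v z = 0"
proof -
  have "vp.vs1.subspace (ZS Y)" by (rule vp.vs1.subspaceI) (auto simp: ZS_def)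
  moreover have "dl ` Y \<subseteq> ZS Y" by (auto simp: ZS_def dl_def)
  ultimately have "vp.vs1.span (dl ` Y) \<subseteq> ZS Y" using vp.vs1.span_minimal by blast
  then show ?thesis using assms unfolding ZS_def by blast
qed



lemma KL:
  assumes wg: "weighted_graph V w" and inf: "infinite V" and con: "connected_graph V w"
    and lf: "locally_finite V w"
    and H2: "\<not> (\<exists>u. finitely_supported V u \<and> (\<exists>x\<in>V. u x \<noteq> 0) \<and> harmonic_on w (V - X) u)"
    and v: "v \<in> KS V w" and vz: "\<forall>z. z \<notin> X \<longrightarrow> v z = 0"
  shows "v = 0"
proof -
  obtain u where u: "finite {x. u x \<noteq> 0}" "\<forall>x. x \<notin> V \<longrightarrow> u x = 0" "v = Kop w u"
    using v unfolding KS_def by blast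
  have "harmonic_on w (V - X) u" unfolding harmonic_on_def
  proof
    fix x assume x: "x \<in> V - X"
    have "Kop w u x = 0" using vz x u(3) by auto
    then show "laplacian w u x = 0" using lap_iff_K[OF deg_pos[OF wg lf inf con]] x by blast
  qed
  moreover have "finitely_supported V u" unfolding finitely_supported_def
    by (rule finite_subset[OF _ u(1)]) blast
  ultimately have "\<forall>x\<in>V. u x = 0" using H2 by blast
  then have "u = 0" using u(2) by (auto simp: fun_eq_iff)
  then have "v = Kop w 0" using u(3) by simp
  then show "v = 0" by (simp add: fun_eq_iff Kop_zero)
qed

lemma indep_ext:
  assumes KLh: "\<forall>v. v \<in> KS V w \<and> (\<forall>z. z \<notin> X \<longrightarrow> v z = 0) \<longrightarrow> v = 0"
    and BE: "B \<subseteq> (\<lambda>x. Kop w (dl x)) ` V" and iB: "vp.vs1.independent B"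
    and fin: "finite Y"
  shows "Y \<subseteq> X \<longrightarrow> vp.vs1.independent (B \<union> dl ` Y)"
  using fin
proof (induction Y rule: finite_induct)
  case empty then show ?case using iB by (simp only: image_empty Un_empty_right) simp
next
  case (insert x F)
  show ?case
  proof
    assume xF: "insert x F \<subseteq> X"
    then have iF: "vp.vs1.independent (B \<union> dl ` F)" using insert.IH by blast
    have nin: "dl x \<notin> vp.vs1.span (B \<union> dl ` F)"
    proof
      assume "dl x \<in> vp.vs1.span (B \<union> dl ` F)"
      then obtain a b where ab: "dl x = a + b" "a \<in> vp.vs1.span B" "b \<in> vp.vs1.span (dl ` F)"
        unfolding vp.vs1.span_Un by blast
      have "a \<in> vp.vs1.span ((\<lambda>x. Kop w (dl x)) ` V)" using ab(2) vp.vs1.span_mono[OF BE] by blast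
      then have aK: "a \<in> KS V w" by (rule span_K)
      have bz: "\<forall>z. z \<notin> F \<longrightarrow> b z = 0" using span_dl[OF ab(3)] .
      have "\<forall>z. z \<notin> X \<longrightarrow> a z = 0"
      proof (intro allI impI)
        fix z assume z: "z \<notin> X"
        then have "z \<noteq> x" "z \<notin> F" using xF by auto
        then have "dl x z = 0" "b z = 0" using bz by (auto simp: dl_def)
        moreover have "dl x z = a z + b z" using ab(1) by simp
        ultimately show "a z = 0" by simp
      qed
      then have "a = 0" using KLh aK by blast
      then have "dl x x = b x" using ab(1) by simp
      moreover have "b x = 0" using bz insert.hyps(2) by blast
      ultimately show False by (simp add: dl_def)
    qed
    have "B \<union> dl ` insert x F = insert (dl x) (B \<union> dl ` F)" by auto
    then show "vp.vs1.independent (B \<union> dl ` insert x F)"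
      using vp.vs1.independent_insertI[OF nin iF] by simp
  qed
qed

lemma Kop_dl:
  assumes wg: "weighted_graph V w" and lf: "locally_finite V w"
  shows "Kop w (dl x) = sc (deg w x) (dl x) - (\<Sum>y\<in>nbrs w x. sc (w x y) (dl y))"
proof (rule ext)
  fix z
  have fn: "\<And>a. finite (nbrs w a)" using wg_finite_nbrs[OF wg lf] .
  have sym: "\<And>a b. w a b = w b a" using wg unfolding weighted_graph_def by blast
  have e1: "(\<lambda>y. w z y * dl x y) = (\<lambda>y. if y = x then w z x else 0)" by (auto simp: dl_def fun_eq_iff)
  have e2: "(\<lambda>y. w x y * dl y z) = (\<lambda>y. if y = z then w x z else 0)" by (auto simp: dl_def fun_eq_iff)
  have s1: "(\<Sum>y\<in>nbrs w z. w z y * dl x y) = (if x \<in> nbrs w z then w z x else 0)"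
    unfolding e1 using fn by (simp add: sum.delta)
  have s2: "(\<Sum>y\<in>nbrs w x. sc (w x y) (dl y)) z = (if z \<in> nbrs w x then w x z else 0)"
    unfolding sum_fun_apply sc_apply e2 using fn by (simp add: sum.delta)
  show "Kop w (dl x) z = (sc (deg w x) (dl x) - (\<Sum>y\<in>nbrs w x. sc (w x y) (dl y))) z"
  proof (cases "z = x")
    case True
    then show ?thesis unfolding Kop_def s1 minus_apply s2 by (simp add: dl_def)
  next
    case False
    have "x \<in> nbrs w z \<longleftrightarrow> z \<in> nbrs w x" using wg_nbr_sym[OF wg] by blast
    then show ?thesis unfolding Kop_def s1 minus_apply s2 using False by (simp add: dl_def sym[of z x])
  qed
qed



lemma dir21:
  assumes wg: "weighted_graph V w" and inf: "infinite V" and con: "connected_graph V w"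
    and lf: "locally_finite V w" and finX: "finite X" and XV: "X \<subseteq> V"
    and H2: "\<not> (\<exists>u. finitely_supported V u \<and> (\<exists>x\<in>V. u x \<noteq> 0) \<and> harmonic_on w (V - X) u)"
  shows "\<exists>g. (\<forall>x\<in>X. g x = f x) \<and> harmonic_on w V g"
proof -
  define E where "E = (\<lambda>x. Kop w (dl x)) ` V"
  have KLh: "\<forall>v. v \<in> KS V w \<and> (\<forall>z. z \<notin> X \<longrightarrow> v z = 0) \<longrightarrow> v = 0"
    using KL[OF wg inf con lf H2] by blast
  obtain B where BE: "B \<subseteq> E" and iB: "vp.vs1.independent B" and EB: "E \<subseteq> vp.vs1.span B"
    using vp.vs1.maximal_independent_subset[of E] by blast
  have iBD: "vp.vs1.independent (B \<union> dl ` X)"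
    using indep_ext[OF KLh BE[unfolded E_def] iB finX] by blast
  have dlB: "dl x \<notin> B" if "x \<in> X" for x
  proof
    assume "dl x \<in> B"
    then have "dl x \<in> vp.vs1.span E" using BE vp.vs1.span_base by blast
    then have "dl x \<in> KS V w" unfolding E_def by (rule span_K)
    moreover have "\<forall>z. z \<notin> X \<longrightarrow> dl x z = 0" using that by (auto simp: dl_def)
    ultimately have "dl x = 0" using KLh by blast
    then have "dl x x = 0" by simp
    then show False by (simp add: dl_def)
  qed
  have dl_inj: "dl x = dl y \<Longrightarrow> x = y" for x y
    by (metis dl_def one_neq_zero)
  define h where "h b = (if b \<in> B then 0 else f (SOME x. x \<in> X \<and> b = dl x))" for b
  obtain \<phi> where lin: "Vector_Spaces.linear sc (*) \<phi>" and \<phi>h: "\<forall>b\<in>B \<union> dl ` X. \<phi> b = h b"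
    using vp.linear_independent_extend[OF iBD, of h] by blast
  define g where "g z = \<phi> (dl z)" for z
  have gX: "\<forall>x\<in>X. g x = f x"
  proof
    fix x assume x: "x \<in> X"
    have "(SOME y. y \<in> X \<and> dl x = dl y) = x"
      by (rule some_equality) (use x dl_inj in force)+
    then have "h (dl x) = f x" unfolding h_def using dlB[OF x] by simp
    moreover have "dl x \<in> B \<union> dl ` X" using x by blast
    ultimately show "g x = f x" unfolding g_def using \<phi>h by metis
  qed
  have \<phi>0: "\<phi> v = 0" if "v \<in> E" for v
  proof -
    have "v \<in> vp.vs1.span B" using EB that by blast
    then show ?thesis
      by (rule vp.linear_eq_0_on_span[OF lin, rotated]) (simp add: \<phi>h h_def)
  qed
  have "harmonic_on w V g" unfolding harmonic_on_def
  proof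
    fix x assume x: "x \<in> V"
    have "\<phi> (Kop w (dl x)) = \<phi> (sc (deg w x) (dl x)) - \<phi> (\<Sum>y\<in>nbrs w x. sc (w x y) (dl y))"
      unfolding Kop_dl[OF wg lf] by (rule vp.linear_diff[OF lin])
    also have "\<dots> = deg w x * g x - (\<Sum>y\<in>nbrs w x. w x y * g y)"
      unfolding g_def vp.linear_scale[OF lin] vp.linear_sum[OF lin] by simp
    also have "\<dots> = Kop w g x" unfolding Kop_def ..
    finally have "Kop w g x = 0" using \<phi>0[of "Kop w (dl x)"] x unfolding E_def by auto
    then show "laplacian w g x = 0" using lap_iff_K[OF deg_pos[OF wg lf inf con x]] by blast
  qed
  then show ?thesis using gX by blast
qed


theorem proposition5p1:
  fixes V :: "'a set" and w :: "'a \<Rightarrow> 'a \<Rightarrow> real" and X :: "'a set"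
  assumes "weighted_graph V w"
    and "infinite V"
    and "connected_graph V w"
    and "locally_finite V w"
    and "finite X" and "X \<subseteq> V"
  shows "(\<forall>f :: 'a \<Rightarrow> real. \<exists>g. (\<forall>x\<in>X. g x = f x) \<and> harmonic_on w V g)
     \<longleftrightarrow> \<not> (\<exists>u. finitely_supported V u \<and> (\<exists>x\<in>V. u x \<noteq> 0) \<and> harmonic_on w (V - X) u)"
proof
  assume H: "\<forall>f :: 'a \<Rightarrow> real. \<exists>g. (\<forall>x\<in>X. g x = f x) \<and> harmonic_on w V g"
  show "\<not> (\<exists>u. finitely_supported V u \<and> (\<exists>x\<in>V. u x \<noteq> 0) \<and> harmonic_on w (V - X) u)"
    using dir12[OF assms H] by blast
next
  assume H2: "\<not> (\<exists>u. finitely_supported V u \<and> (\<exists>x\<in>V. u x \<noteq> 0) \<and> harmonic_on w (V - X) u)"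
  show "\<forall>f :: 'a \<Rightarrow> real. \<exists>g. (\<forall>x\<in>X. g x = f x) \<and> harmonic_on w V g"
    using dir21[OF assms H2] by blast
qed

end
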